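(* Let $n\ge2$, $\lambda\in(-1,1)$, let $g$ be $\mathscr{R}$-admissible and infinitesimal, and let $G$ be $\mathscr{G}$-admissible. There exists $c>0$ depending on $n,\lambda,g,G$ such that for every $m\ge1$ there exists $E\subset\mathbb{R}^n\setminus H$ with $|E|=m$ and $\mathscr{F}^\lambda(E)\le c\,m$.
   Context: $H:=\{x\in\mathbb{R}^n: x_n\le 0\}$; $|\cdot|$ is Lebesgue measure, $\mathcal{H}^{n-1}$ the $(n-1)$-dimensional Hausdorff measure, $P(E,A)$ the perimeter of $E$ in the open set $A$, $\partial^*E$ the reduced boundary. For measurable $E\subset\mathbb{R}^n\setminus H$: $P_\lambda(E):=P(E,\mathbb{R}^n\setminus H)-\lambda\mathcal{H}^{n-1}(\partial^*E\cap\partial H)$; $\mathscr{R}(E):=\int_E\int_E g(y-x)\,dy\,dx$; $\mathscr{G}(E):=\int_E G(x_n)\,dx$; $\mathscr{F}^\lambda(E):=P_\lambda(E)+\mathscr{R}(E)+\mathscr{G}(E)$. $g:\mathbb{R}^n\setminus\{0\}\to(0,\infty)$ is $\mathscr{R}$-admissible if $\mathscr{R}(B_1)<\infty$; infinitesimal if $g(x)\to0$ as $|x|\to\infty$. $G:(0,\infty)\to(0,\infty)$ is $\mathscr{G}$-admissible if $\sup_{t\in(0,2)}G(t)<\infty$ and $G(\alpha t)\le\alpha^nG(t)$ for all $\alpha>1,t>0$. *)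

theory Defs
  imports "HOL-Analysis.Analysis"
begin

text \<open>Ambient space: R^n is modelled as the product type 'b \<times> real, where 'b is any
  euclidean space (of dimension n-1 \<ge> 1); the last coordinate x_n is snd x.
  Thus n = DIM('b \<times> real) \<ge> 2 automatically.\<close>

definition lower_half :: "('b::euclidean_space \<times> real) set" where
  "lower_half = {x. snd x \<le> 0}"

definition Cc1_fields :: "'a::euclidean_space set \<Rightarrow> ('a \<Rightarrow> 'a) set" where
  "Cc1_fields A = {T. (\<exists>T'. (\<forall>x. (T has_derivative T' x) (at x)) \<and>
                          (\<forall>v. continuous_on UNIV (\<lambda>x. T' x v))) \<and>
                     compact (closure {x. T x \<noteq> 0}) \<and> closure {x. T x \<noteq> 0} \<subseteq> A}"

definition divergence :: "('a::euclidean_space \<Rightarrow> 'a) \<Rightarrow> 'a \<Rightarrow> real" where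
  "divergence T x = (\<Sum>b\<in>Basis. frechet_derivative T (at x) b \<bullet> b)"

definition perimeter :: "'a::euclidean_space set \<Rightarrow> 'a set \<Rightarrow> ereal" where
  "perimeter E A = (SUP T \<in> {T \<in> Cc1_fields A. \<forall>x. norm (T x) \<le> 1}.
                       ereal (LINT x:E|lebesgue. divergence T x))"

text \<open>s-dimensional Hausdorff measure (normalised so that H^k agrees with
  k-dimensional Lebesgue measure on k-planes).\<close>
definition hausdorff_omega :: "real \<Rightarrow> real" where
  "hausdorff_omega s = pi powr (s / 2) / Gamma (s / 2 + 1)"

definition hausdorff_delta :: "real \<Rightarrow> real \<Rightarrow> 'a::metric_space set \<Rightarrow> ennreal" where
  "hausdorff_delta s \<delta> S = (INF C \<in> {C :: nat \<Rightarrow> 'a set. S \<subseteq> (\<Union>i. C i) \<and> (\<forall>i. bounded (C i) \<and> diameter (C i) \<le> \<delta>)}.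
       (\<Sum>i. ennreal (hausdorff_omega s * (diameter (C i) / 2) powr s)))"

definition hausdorff_measure :: "real \<Rightarrow> 'a::metric_space set \<Rightarrow> ennreal" where
  "hausdorff_measure s S = (SUP \<delta> \<in> {0<..}. hausdorff_delta s \<delta> S)"

text \<open>Gauss--Green measure of E: mu is |mu_E| (a locally finite Borel measure), nu the
  polar density, so that int_E div T = int T . nu d mu for all T in C^1_c.\<close>
definition gauss_green :: "'a::euclidean_space set \<Rightarrow> 'a measure \<Rightarrow> ('a \<Rightarrow> 'a) \<Rightarrow> bool" where
  "gauss_green E \<mu> \<nu> \<longleftrightarrow> sets \<mu> = sets borel \<and>
     (\<forall>K. compact K \<longrightarrow> emeasure \<mu> K < \<infinity>) \<and>
     \<nu> \<in> borel_measurable borel \<and> (\<forall>x. norm (\<nu> x) = 1) \<and>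
     (\<forall>T \<in> Cc1_fields UNIV.
        (LINT x:E|lebesgue. divergence T x) = (LINT x|\<mu>. T x \<bullet> \<nu> x))"

definition reduced_boundary :: "'a::euclidean_space set \<Rightarrow> 'a set" where
  "reduced_boundary E = {x. \<exists>\<mu> \<nu>. gauss_green E \<mu> \<nu> \<and>
      (\<forall>r>0. emeasure \<mu> (ball x r) > 0) \<and>
      (\<exists>u. norm u = 1 \<and>
         ((\<lambda>r. (1 / measure \<mu> (ball x r)) *\<^sub>R (\<integral>y. indicator (ball x r) y *\<^sub>R \<nu> y \<partial>\<mu>))
            \<longlongrightarrow> u) (at_right 0))}"

definition P_lambda :: "real \<Rightarrow> ('b::euclidean_space \<times> real) set \<Rightarrow> ereal" where
  "P_lambda lam E = perimeter E (- lower_half)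
     - ereal lam * enn2ereal (hausdorff_measure (real DIM('b \<times> real) - 1)
                                 (reduced_boundary E \<inter> frontier lower_half))"

definition R_energy :: "('a::euclidean_space \<Rightarrow> real) \<Rightarrow> 'a set \<Rightarrow> ennreal" where
  "R_energy g E = (\<integral>\<^sup>+ x. (\<integral>\<^sup>+ y. ennreal (g (y - x)) * indicator E y \<partial>lebesgue) * indicator E x \<partial>lebesgue)"

definition G_energy :: "(real \<Rightarrow> real) \<Rightarrow> ('b::euclidean_space \<times> real) set \<Rightarrow> ennreal" where
  "G_energy G E = (\<integral>\<^sup>+ x. ennreal (G (snd x)) * indicator E x \<partial>lebesgue)"

definition F_energy :: "real \<Rightarrow> (('b::euclidean_space \<times> real) \<Rightarrow> real) \<Rightarrow> (real \<Rightarrow> real)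
                         \<Rightarrow> ('b \<times> real) set \<Rightarrow> ereal" where
  "F_energy lam g G E = P_lambda lam E + enn2ereal (R_energy g E) + enn2ereal (G_energy G E)"

definition R_admissible :: "('a::euclidean_space \<Rightarrow> real) \<Rightarrow> bool" where
  "R_admissible g \<longleftrightarrow> (\<forall>x. x \<noteq> 0 \<longrightarrow> g x > 0) \<and> R_energy g (ball 0 1) < \<infinity>"

definition infinitesimal :: "('a::euclidean_space \<Rightarrow> real) \<Rightarrow> bool" where
  "infinitesimal g \<longleftrightarrow> (g \<longlongrightarrow> 0) at_infinity"

definition G_admissible :: "nat \<Rightarrow> (real \<Rightarrow> real) \<Rightarrow> bool" where
  "G_admissible n G \<longleftrightarrow> (\<forall>t>0. G t > 0) \<and> bdd_above (G ` {0<..<2}) \<and>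
      (\<forall>\<alpha> t. \<alpha> > 1 \<longrightarrow> t > 0 \<longrightarrow> G (\<alpha> * t) \<le> \<alpha> ^ n * G t)"

end

theory Submission
  imports Defs
begin

definition hs :: "real \<Rightarrow> real" where
  "hs t = (if t \<le> 0 then 0 else if 1 \<le> t then 1 else 3*t^2 - 2*t^3)"
definition hs' :: "real \<Rightarrow> real" where
  "hs' t = (if t \<le> 0 then 0 else if 1 \<le> t then 0 else 6*t - 6*t^2)"

lemma hs_bounds: "0 \<le> hs t" "hs t \<le> 1"
proof -
  have "0 \<le> 3*t^2 - 2*t^3 \<and> 3*t^2 - 2*t^3 \<le> 1" if "0 < t" "t < 1"
  proof -
    have "3*t^2 - 2*t^3 = t^2 * (3 - 2*t)" by (simp add: algebra_simps power2_eq_square power3_eq_cube)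
    moreover have "1 - (3*t^2 - 2*t^3) = (1-t)^2 * (1 + 2*t)" by (simp add: algebra_simps power2_eq_square power3_eq_cube)
    ultimately show ?thesis using that
      by (smt (verit) mult_nonneg_nonneg zero_le_power2)
  qed
  then show "0 \<le> hs t" "hs t \<le> 1" unfolding hs_def by auto
qed

lemma hs'_alt: "hs' t = 6 * max 0 (min 1 t) - 6 * (max 0 (min 1 t))^2"
  unfolding hs'_def by auto

lemma hs_cont: "continuous_on UNIV hs'"
  unfolding hs'_alt[abs_def] by (intro continuous_intros)

lemma hs_deriv: "(hs has_real_derivative hs' t) (at t)"
proof -
  consider "t < 0" | "t = 0" | "0 < t \<and> t < 1" | "t = 1" | "t > 1" by linarith
  then show ?thesis
  proof cases
    case 1
    have "eventually (\<lambda>x. hs x = 0) (nhds t)"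
      using eventually_nhds_in_open[of "{..<0}" t] 1
      by (auto simp: hs_def elim!: eventually_mono)
    then have "(hs has_real_derivative 0) (at t) \<longleftrightarrow> ((\<lambda>_. 0) has_real_derivative 0) (at t)"
      by (intro DERIV_cong_ev) auto
    then show ?thesis using 1 by (simp add: hs'_def)
  next
    case 3
    have "eventually (\<lambda>x. hs x = 3*x^2 - 2*x^3) (nhds t)"
      using eventually_nhds_in_open[of "{0<..<1}" t] 3
      by (auto simp: hs_def elim!: eventually_mono)
    then have "(hs has_real_derivative hs' t) (at t) \<longleftrightarrow> ((\<lambda>x. 3*x^2 - 2*x^3) has_real_derivative 6*t - 6*t^2) (at t)"
      using 3 by (intro DERIV_cong_ev) (auto simp: hs'_def)
    moreover have "((\<lambda>x. 3*x^2 - 2*x^3) has_real_derivative 6*t - 6*t^2) (at t)"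
      by (auto intro!: derivative_eq_intros simp: power2_eq_square)
    ultimately show ?thesis by simp
  next
    case 5
    have "eventually (\<lambda>x. hs x = 1) (nhds t)"
      using eventually_nhds_in_open[of "{1<..}" t] 5
      by (auto simp: hs_def elim!: eventually_mono)
    then have "(hs has_real_derivative 0) (at t) \<longleftrightarrow> ((\<lambda>_. 1) has_real_derivative 0) (at t)"
      by (intro DERIV_cong_ev) auto
    then show ?thesis using 5 by (simp add: hs'_def)
  next
    case 2
    show ?thesis unfolding DERIV_def filterlim_at_split
    proof
      have lim: "((\<lambda>h. 0) \<longlongrightarrow> 0) (at_left (0::real))" by simp
      have ev: "eventually (\<lambda>h. 0 = (hs (t + h) - hs t) / h) (at_left 0)"
        using 2 unfolding eventually_at_left_field by (intro exI[of _ "-1"]) (auto simp: hs_def)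
      show "((\<lambda>h. (hs (t + h) - hs t) / h) \<longlongrightarrow> hs' t) (at_left 0)"
        using 2 Lim_transform_eventually[OF lim ev] by (simp add: hs'_def)
      have lim: "((\<lambda>h. 3*h - 2*h^2) \<longlongrightarrow> 3*0 - 2*0^2) (at_right (0::real))" 
        by (intro tendsto_intros)
      have ev: "eventually (\<lambda>h. 3*h - 2*h^2 = (hs (t + h) - hs t) / h) (at_right 0)"
        using 2 unfolding eventually_at_right_field by (intro exI[of _ "1"]) (auto simp: hs_def field_simps power2_eq_square power3_eq_cube)
      show "((\<lambda>h. (hs (t + h) - hs t) / h) \<longlongrightarrow> hs' t) (at_right 0)"
        using 2 Lim_transform_eventually[OF lim ev] by (simp add: hs'_def)
    qed
  next
    case 4
    show ?thesis unfolding DERIV_def filterlim_at_split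
    proof
      have lim: "((\<lambda>h. 0) \<longlongrightarrow> 0) (at_right (0::real))" by simp
      have ev: "eventually (\<lambda>h. 0 = (hs (t + h) - hs t) / h) (at_right 0)"
        using 4 unfolding eventually_at_right_field by (intro exI[of _ "1"]) (auto simp: hs_def)
      show "((\<lambda>h. (hs (t + h) - hs t) / h) \<longlongrightarrow> hs' t) (at_right 0)"
        using 4 Lim_transform_eventually[OF lim ev] by (simp add: hs'_def)
      have lim: "((\<lambda>h. -3*h - 2*h^2) \<longlongrightarrow> -3*0 - 2*0^2) (at_left (0::real))" 
        by (intro tendsto_intros)
      have ev: "eventually (\<lambda>h. -3*h - 2*h^2 = (hs (t + h) - hs t) / h) (at_left 0)"
        using 4 unfolding eventually_at_left_field by (intro exI[of _ "-1"]) (auto simp: hs_def field_simps power2_eq_square power3_eq_cube)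
      show "((\<lambda>h. (hs (t + h) - hs t) / h) \<longlongrightarrow> hs' t) (at_left 0)"
        using 4 Lim_transform_eventually[OF lim ev] by (simp add: hs'_def)
    qed
  qed
qed

lemma hs_alt: "hs t = 3 * (max 0 (min 1 t))^2 - 2 * (max 0 (min 1 t))^3"
  unfolding hs_def by auto

lemma hs_contin: "continuous_on UNIV hs"
  unfolding hs_alt[abs_def] by (intro continuous_intros)

lemma hs_neg: "t \<le> 0 \<Longrightarrow> hs t = 0" "t \<le> 0 \<Longrightarrow> hs' t = 0"
  unfolding hs_def hs'_def by auto

lemma hs_one: "1 \<le> t \<Longrightarrow> hs t = 1"
  unfolding hs_def by auto

lemma ball_integral_zero:
  fixes E :: "'a::euclidean_space set" and x :: 'a
  assumes gg: "gauss_green E \<mu> \<nu>" and far: "\<forall>y\<in>E. 1 \<le> norm (y - x)"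
    and r: "0 < r" "r < 1"
  shows "(\<integral>y. indicator (ball x r) y *\<^sub>R \<nu> y \<partial>\<mu>) = 0"
proof -
  have sets_mu: "sets \<mu> = sets borel" and fin: "\<And>K. compact K \<Longrightarrow> emeasure \<mu> K < \<infinity>"
    and nu_meas: "\<nu> \<in> borel_measurable borel" and nu_norm: "\<And>y. norm (\<nu> y) = 1"
    and gg_eq: "\<And>T. T \<in> Cc1_fields UNIV \<Longrightarrow> (LINT y:E|lebesgue. divergence T y) = (LINT y|\<mu>. T y \<bullet> \<nu> y)"
    using gg unfolding gauss_green_def by auto
  have meas_eq: "borel_measurable \<mu> = borel_measurable borel"
    by (rule measurable_cong_sets) (use sets_mu in auto)
  define \<psi> where "\<psi> k y = hs (real (Suc k) * (r^2 - (y - x) \<bullet> (y - x)))" for k y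
  have psi_cont: "continuous_on UNIV (\<psi> k)" for k
    unfolding \<psi>_def
    by (rule continuous_on_compose2[OF hs_contin]) (auto intro!: continuous_intros)
  have psi0: "\<psi> k y = 0" if "r \<le> norm (y - x)" for k y
  proof -
    have "r^2 \<le> (norm (y - x))^2" using that r by (intro power_mono) auto
    then have "r^2 \<le> (y - x) \<bullet> (y - x)" by (simp add: power2_norm_eq_inner)
    then show ?thesis unfolding \<psi>_def
      by (intro hs_neg) (simp add: mult_nonneg_nonpos)
  qed
  have main: "(\<integral>y. indicator (ball x r) y * (w \<bullet> \<nu> y) \<partial>\<mu>) = 0" if w: "w \<in> Basis" for w
  proof -
    define T where "T k y = \<psi> k y *\<^sub>R w" for k y
    define T' where "T' k y v = (hs' (real (Suc k) * (r^2 - (y - x) \<bullet> (y - x))) *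
        (real (Suc k) * (- (2 * ((y - x) \<bullet> v))))) *\<^sub>R w" for k y v
    have der: "(T k has_derivative T' k y) (at y)" for k y
    proof -
      have d1: "((\<lambda>y. real (Suc k) * (r^2 - (y - x) \<bullet> (y - x))) has_derivative
              (\<lambda>v. real (Suc k) * (- (2 * ((y - x) \<bullet> v))))) (at y)"
        by (auto intro!: derivative_eq_intros simp: inner_commute)
      have "((\<lambda>y. \<psi> k y) has_derivative (\<lambda>v. real (Suc k) * (- (2 * ((y - x) \<bullet> v))) *
             hs' (real (Suc k) * (r^2 - (y - x) \<bullet> (y - x))))) (at y)"
        unfolding \<psi>_def by (rule DERIV_compose_FDERIV[OF hs_deriv d1])
      then show ?thesis unfolding T_def T'_def
        by (auto intro!: derivative_eq_intros simp: mult.commute)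
    qed
    have T'cont: "continuous_on UNIV (\<lambda>y. T' k y v)" for k v
      unfolding T'_def
      by (intro continuous_intros continuous_on_compose2[OF hs_cont]) auto
    have supp: "closure {y. T k y \<noteq> 0} \<subseteq> cball x r" for k
    proof (rule closure_minimal)
      show "{y. T k y \<noteq> 0} \<subseteq> cball x r"
        using psi0[of _ k] by (force simp: T_def dist_norm norm_minus_commute)
    qed auto
    have Tcc: "T k \<in> Cc1_fields UNIV" for k
      unfolding Cc1_fields_def
    proof (safe)
      show "\<exists>T''. (\<forall>y. (T k has_derivative T'' y) (at y)) \<and> (\<forall>v. continuous_on UNIV (\<lambda>y. T'' y v))"
        using der T'cont by blast
      have "compact (cball x r \<inter> closure {y. T k y \<noteq> 0})" by auto
      moreover have "cball x r \<inter> closure {y. T k y \<noteq> 0} = closure {y. T k y \<noteq> 0}" using supp by auto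
      ultimately show "compact (closure {y. T k y \<noteq> 0})" by simp
    qed simp
    have div0: "divergence (T k) y = 0" if "y \<in> E" for k y
    proof -
      have "r^2 \<le> 1" using r by (simp add: power_le_one)
      also have "1 \<le> (norm (y - x))^2" using far that by (simp add: one_le_power)
      finally have "r^2 \<le> (y - x) \<bullet> (y - x)" by (simp add: power2_norm_eq_inner)
      then have "hs' (real (Suc k) * (r^2 - (y - x) \<bullet> (y - x))) = 0"
        by (intro hs_neg) (simp add: mult_nonneg_nonpos)
      then have "T' k y = (\<lambda>v. 0)" unfolding T'_def by auto
      moreover have "frechet_derivative (T k) (at y) = T' k y"
        using frechet_derivative_at[OF der] by simp
      ultimately show ?thesis unfolding divergence_def by simp
    qed
    have int0: "(\<integral>y. \<psi> k y * (w \<bullet> \<nu> y) \<partial>\<mu>) = 0" for k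
    proof -
      have "(LINT y:E|lebesgue. divergence (T k) y) = 0"
      proof -
        have "(\<lambda>y. indicator E y *\<^sub>R divergence (T k) y) = (\<lambda>y. 0)"
          using div0 by (auto simp: fun_eq_iff split: split_indicator)
        then show ?thesis unfolding set_lebesgue_integral_def by simp
      qed
      then have "(LINT y|\<mu>. T k y \<bullet> \<nu> y) = 0" using gg_eq[OF Tcc] by simp
      then show ?thesis unfolding T_def by (simp add: inner_commute)
    qed
    have cb_sets: "cball x r \<in> sets \<mu>" using sets_mu by simp
    have cb_fin: "emeasure \<mu> (cball x r) < \<infinity>" using fin by simp
    have "(\<lambda>k. \<integral>y. \<psi> k y * (w \<bullet> \<nu> y) \<partial>\<mu>) \<longlonglongrightarrow> (\<integral>y. indicator (ball x r) y * (w \<bullet> \<nu> y) \<partial>\<mu>)"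
    proof (rule integral_dominated_convergence[where w="indicator (cball x r)"])
      show "(\<lambda>y. indicator (ball x r) y * (w \<bullet> \<nu> y)) \<in> borel_measurable \<mu>"
        unfolding meas_eq using nu_meas
        by (intro borel_measurable_times borel_measurable_indicator borel_measurable_inner) auto
      show "(\<lambda>y. \<psi> k y * (w \<bullet> \<nu> y)) \<in> borel_measurable \<mu>" for k
        unfolding meas_eq using nu_meas borel_measurable_continuous_onI[OF psi_cont[of k]]
        by (intro borel_measurable_times borel_measurable_inner) auto
      show "integrable \<mu> (indicator (cball x r) :: 'a \<Rightarrow> real)"
        using cb_sets cb_fin by auto
      show "AE y in \<mu>. (\<lambda>k. \<psi> k y * (w \<bullet> \<nu> y)) \<longlonglongrightarrow> indicator (ball x r) y * (w \<bullet> \<nu> y)"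
      proof (rule AE_I2)
        fix y
        show "(\<lambda>k. \<psi> k y * (w \<bullet> \<nu> y)) \<longlonglongrightarrow> indicator (ball x r) y * (w \<bullet> \<nu> y)"
        proof (cases "norm (y - x) < r")
          case True
          have "(norm (y - x))^2 < r^2" using True by (intro power_strict_mono) auto
          then have pos: "0 < r^2 - (y - x) \<bullet> (y - x)" by (simp add: power2_norm_eq_inner)
          obtain N :: nat where N: "1 / (r^2 - (y - x) \<bullet> (y - x)) < real N"
            using reals_Archimedean2 by blast
          have "eventually (\<lambda>k. \<psi> k y * (w \<bullet> \<nu> y) = indicator (ball x r) y * (w \<bullet> \<nu> y)) sequentially"
            unfolding eventually_sequentially
          proof (intro exI[of _ N] allI impI)
            fix k assume "N \<le> k"
            then have "1 / (r^2 - (y - x) \<bullet> (y - x)) \<le> real (Suc k)" using N by linarith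
            then have "1 \<le> real (Suc k) * (r^2 - (y - x) \<bullet> (y - x))"
              using pos by (simp add: field_simps)
            then show "\<psi> k y * (w \<bullet> \<nu> y) = indicator (ball x r) y * (w \<bullet> \<nu> y)"
              using True by (simp add: \<psi>_def hs_one dist_norm norm_minus_commute)
          qed
          then show ?thesis by (rule tendsto_eventually)
        next
          case False
          then show ?thesis using psi0[of y] by (simp add: dist_norm norm_minus_commute)
        qed
      qed
      show "AE y in \<mu>. norm (\<psi> k y * (w \<bullet> \<nu> y)) \<le> indicator (cball x r) y" for k
      proof (rule AE_I2)
        fix y
        have wn: "\<bar>w \<bullet> \<nu> y\<bar> \<le> 1"
          using Cauchy_Schwarz_ineq2[of w "\<nu> y"] w nu_norm by simp
        have "\<bar>\<psi> k y\<bar> \<le> 1" unfolding \<psi>_def using hs_bounds by (simp add: abs_le_iff)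
        then have "\<bar>\<psi> k y * (w \<bullet> \<nu> y)\<bar> \<le> 1" using wn by (simp add: abs_mult mult_le_one)
        then show "norm (\<psi> k y * (w \<bullet> \<nu> y)) \<le> indicator (cball x r) y"
          using psi0[of y k] by (auto simp: dist_norm norm_minus_commute split: split_indicator)
      qed
    qed
    then show ?thesis using int0 LIMSEQ_unique by (simp add: LIMSEQ_const_iff)
  qed
  have intg: "integrable \<mu> (\<lambda>y. indicator (ball x r) y *\<^sub>R \<nu> y)"
    by (rule integrableI_bounded_set_indicator[where B=1])
       (use sets_mu fin[of "cball x r"] nu_norm in \<open>auto simp: meas_eq nu_meas intro: le_less_trans[OF emeasure_mono[OF ball_subset_cball]]\<close>)
  show ?thesis
  proof (rule euclidean_eqI)
    fix w :: 'a assume w: "w \<in> Basis"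
    have "(\<integral>y. indicator (ball x r) y *\<^sub>R \<nu> y \<partial>\<mu>) \<bullet> w = (\<integral>y. (indicator (ball x r) y *\<^sub>R \<nu> y) \<bullet> w \<partial>\<mu>)"
      by (rule integral_inner_left[symmetric]) (use intg in auto)
    also have "\<dots> = (\<integral>y. indicator (ball x r) y * (w \<bullet> \<nu> y) \<partial>\<mu>)"
      by (simp add: inner_commute)
    also have "\<dots> = 0" using main[OF w] .
    finally show "(\<integral>y. indicator (ball x r) y *\<^sub>R \<nu> y \<partial>\<mu>) \<bullet> w = 0 \<bullet> w" by simp
  qed
qed

lemma not_rb:
  fixes E :: "'a::euclidean_space set"
  assumes far: "\<forall>y\<in>E. 1 \<le> norm (y - x)"
  shows "x \<notin> reduced_boundary E"
proof
  assume "x \<in> reduced_boundary E"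
  then obtain \<mu> \<nu> u where gg: "gauss_green E \<mu> \<nu>" and u: "norm u = 1"
    and lim: "((\<lambda>r. (1 / measure \<mu> (ball x r)) *\<^sub>R (\<integral>y. indicator (ball x r) y *\<^sub>R \<nu> y \<partial>\<mu>)) \<longlongrightarrow> u) (at_right 0)"
    unfolding reduced_boundary_def by blast
  have "eventually (\<lambda>r. (1 / measure \<mu> (ball x r)) *\<^sub>R (\<integral>y. indicator (ball x r) y *\<^sub>R \<nu> y \<partial>\<mu>) = 0) (at_right (0::real))"
    unfolding eventually_at_right_field
    by (intro exI[of _ 1]) (auto simp: ball_integral_zero[OF gg far])
  then have "((\<lambda>r. (1 / measure \<mu> (ball x r)) *\<^sub>R (\<integral>y. indicator (ball x r) y *\<^sub>R \<nu> y \<partial>\<mu>)) \<longlongrightarrow> 0) (at_right 0)"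
    by (rule tendsto_eventually)
  with lim have "u = 0" by (intro tendsto_unique) auto
  with u show False by simp
qed

lemma frontier_lower_half: "frontier (lower_half :: ('b::euclidean_space \<times> real) set) \<subseteq> {x. snd x = 0}"
proof -
  have cl: "closed (lower_half :: ('b \<times> real) set)"
    unfolding lower_half_def by (intro closed_Collect_le continuous_intros)
  have "{x. snd x < 0} \<subseteq> interior (lower_half :: ('b \<times> real) set)"
    by (rule interior_maximal) (auto simp: lower_half_def intro!: open_Collect_less continuous_intros)
  then show ?thesis unfolding frontier_def using closure_closed[OF cl]
    by (auto simp: lower_half_def subset_iff) (meson linorder_neqE_linordered_idom not_le)
qed

lemma rb_hyper:
  fixes E :: "('b::euclidean_space \<times> real) set"
  assumes "E \<subseteq> {y. 1 \<le> snd y}"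
  shows "reduced_boundary E \<inter> frontier lower_half = {}"
proof -
  have "x \<notin> reduced_boundary E" if "snd x = 0" for x :: "'b \<times> real"
  proof (rule not_rb, intro ballI)
    fix y assume "y \<in> E"
    then have "1 \<le> norm (snd (y - x))" using assms that by auto
    also have "\<dots> \<le> norm (y - x)" by (metis norm_snd_le prod.collapse)
    finally show "1 \<le> norm (y - x)" .
  qed
  then show ?thesis using frontier_lower_half by blast
qed

lemma hausdorff_empty: "hausdorff_measure s ({} :: 'a::metric_space set) = 0"
proof -
  have "hausdorff_delta s d ({} :: 'a set) = 0" if "d > 0" for d
  proof -
    have "hausdorff_delta s d ({} :: 'a set) \<le> (\<Sum>i. ennreal (hausdorff_omega s * (diameter ((\<lambda>i::nat. {} :: 'a set) i) / 2) powr s))"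
      unfolding hausdorff_delta_def using that by (intro INF_lower) auto
    also have "\<dots> = 0" by simp
    finally show ?thesis by simp
  qed
  then show ?thesis unfolding hausdorff_measure_def by simp
qed


lemma deriv_int_bound:
  fixes f :: "'a::euclidean_space \<Rightarrow> real" and b :: 'a
  assumes der: "\<And>x. (f has_derivative f' x) (at x)"
    and fb: "\<And>x. \<bar>f x\<bar> \<le> 1"
    and Db: "\<And>x. \<bar>f' x b\<bar> \<le> C"
    and Dm: "(\<lambda>x. f' x b) \<in> borel_measurable borel"
    and A: "A \<in> sets borel" "emeasure lborel A < \<infinity>"
    and M: "0 \<le> M"
    and sd: "\<And>h. h > 0 \<Longrightarrow> emeasure lborel {y. (y - h *\<^sub>R b \<in> A) \<noteq> (y \<in> A)} \<le> ennreal (h * M)"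
  shows "(\<integral>x. indicator A x * f' x b \<partial>lborel) \<le> M"
proof -
  have fcont: "continuous_on UNIV f"
    using der has_derivative_continuous continuous_at_imp_continuous_on by blast
  have fm[measurable]: "f \<in> borel_measurable borel" using fcont borel_measurable_continuous_onI by blast
  have Am[measurable]: "A \<in> sets borel" using A by simp
  have fsh[measurable]: "(\<lambda>x. f (x + c)) \<in> borel_measurable borel" for c
    by (intro borel_measurable_continuous_onI continuous_on_compose2[OF fcont]) (auto intro!: continuous_intros)
  define hk where "hk k = inverse (real (Suc k))" for k
  have hk_pos: "hk k > 0" for k unfolding hk_def by simp
  define s where "s k x = indicator A x * ((f (x + hk k *\<^sub>R b) - f x) / hk k)" for k x
  have line: "((\<lambda>t. f (x + t *\<^sub>R b)) has_real_derivative f' (x + t *\<^sub>R b) b) (at t)" for x t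
  proof -
    have "((\<lambda>t. x + t *\<^sub>R b) has_derivative (\<lambda>s. s *\<^sub>R b)) (at t)"
      by (auto intro!: derivative_eq_intros)
    from has_derivative_compose[OF this der]
    have *: "((\<lambda>t. f (x + t *\<^sub>R b)) has_derivative (\<lambda>s. f' (x + t *\<^sub>R b) (s *\<^sub>R b))) (at t)" .
    have "linear (f' (x + t *\<^sub>R b))"
      using der has_derivative_linear by blast
    then have e: "(\<lambda>s. f' (x + t *\<^sub>R b) (s *\<^sub>R b)) = (*) (f' (x + t *\<^sub>R b) b)"
      by (auto simp: linear_scale fun_eq_iff mult.commute)
    show ?thesis using * unfolding e has_field_derivative_def .
  qed
  have lim: "(\<lambda>k. (f (x + hk k *\<^sub>R b) - f x) / hk k) \<longlonglongrightarrow> f' x b" for x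
  proof -
    have "((\<lambda>h. (f (x + (0 + h) *\<^sub>R b) - f (x + 0 *\<^sub>R b)) / h) \<longlongrightarrow> f' (x + 0 *\<^sub>R b) b) (at 0)"
      using line[of x 0] unfolding DERIV_def .
    then have l0: "((\<lambda>h. (f (x + h *\<^sub>R b) - f x) / h) \<longlongrightarrow> f' x b) (at 0)" by simp
    have hk0: "hk \<longlonglongrightarrow> 0" unfolding hk_def[abs_def] by (rule LIMSEQ_inverse_real_of_nat)
    have "filterlim hk (at 0) sequentially"
      unfolding filterlim_at using hk_pos hk0
      by (auto simp: less_imp_neq[symmetric])
    from filterlim_compose[OF l0 this] show ?thesis .
  qed
  have bnd: "\<bar>(f (x + h *\<^sub>R b) - f x) / h\<bar> \<le> C" if hpos: "h > 0" for x h
  proof -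
    obtain z where z: "0 < z" "z < h"
      "f (x + h *\<^sub>R b) - f (x + 0 *\<^sub>R b) = (h - 0) * f' (x + z *\<^sub>R b) b"
      using MVT2[of 0 h "\<lambda>t. f (x + t *\<^sub>R b)" "\<lambda>t. f' (x + t *\<^sub>R b) b"] hpos line by blast
    then have "(f (x + h *\<^sub>R b) - f x) / h = f' (x + z *\<^sub>R b) b" using hpos by simp
    then show ?thesis using Db by simp
  qed
  have sm[measurable]: "s k \<in> borel_measurable lborel" for k
    unfolding s_def by measurable
  have wint: "integrable lborel (\<lambda>x. indicator A x * C)"
    using A by (intro integrable_mult_left) auto
  have conv: "(\<lambda>k. integral\<^sup>L lborel (s k)) \<longlonglongrightarrow> (\<integral>x. indicator A x * f' x b \<partial>lborel)"
  proof (rule integral_dominated_convergence[where w="\<lambda>x. indicator A x * C"])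
    show "(\<lambda>x. indicator A x * f' x b) \<in> borel_measurable lborel" using Dm by measurable
    show "AE x in lborel. (\<lambda>k. s k x) \<longlonglongrightarrow> indicator A x * f' x b"
      unfolding s_def by (intro AE_I2 tendsto_mult tendsto_const lim)
    show "AE x in lborel. norm (s k x) \<le> indicator A x * C" for k
      using bnd[OF hk_pos] by (intro AE_I2) (auto simp: s_def split: split_indicator)
  qed (use sm wint in auto)
  have each: "integral\<^sup>L lborel (s k) \<le> M" for k
  proof -
    define h where "h = hk k"
    define c where "c = h *\<^sub>R b"
    have h: "h > 0" using hk_pos h_def by simp
    define D where "D = {y. (y - c \<in> A) \<noteq> (y \<in> A)}"
    have Dm[measurable]: "D \<in> sets borel" unfolding D_def by measurable
    have Dfin: "emeasure lborel D \<le> ennreal (h * M)" using sd[OF h] unfolding D_def c_def .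
    have Dfin': "emeasure lborel D < \<infinity>" using le_less_trans[OF Dfin ennreal_less_top[of "h * M"]] by simp
    have mD: "measure lborel D \<le> h * M"
      using Dfin Dfin' h M by (simp add: emeasure_eq_ennreal_measure ennreal_le_iff)
    have i0: "integrable lborel (\<lambda>x. indicator A x * f x)"
      by (rule integrableI_bounded_set[where A=A and B=1]) (use A fb in \<open>auto split: split_indicator\<close>)
    have i1: "integrable lborel (\<lambda>x. indicator A x * f (x + c))"
      by (rule integrableI_bounded_set[where A=A and B=1]) (use A fb in \<open>auto split: split_indicator\<close>)
    have tr: "distr lborel borel ((+) c) = lborel" by (rule lborel_distr_plus)
    have Pm[measurable]: "(\<lambda>y. indicator A (y - c) * f y) \<in> borel_measurable borel" by measurable
    have i2: "integrable lborel (\<lambda>y. indicator A (y - c) * f y)"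
    proof -
      have "integrable (distr lborel borel ((+) c)) (\<lambda>y. indicator A (y - c) * f y)"
        using i1 by (subst integrable_distr_eq) (auto simp: add.commute)
      then show ?thesis unfolding tr .
    qed
    have eq1: "(\<integral>x. indicator A x * f (x + c) \<partial>lborel) = (\<integral>y. indicator A (y - c) * f y \<partial>lborel)"
    proof -
      have "(\<integral>y. indicator A (y - c) * f y \<partial>lborel) = (\<integral>y. indicator A (y - c) * f y \<partial>distr lborel borel ((+) c))"
        unfolding tr ..
      also have "\<dots> = (\<integral>x. indicator A x * f (x + c) \<partial>lborel)"
        by (subst integral_distr) (auto simp: add.commute)
      finally show ?thesis by simp
    qed
    have "integral\<^sup>L lborel (s k) = ((\<integral>x. indicator A x * f (x + c) \<partial>lborel) - (\<integral>x. indicator A x * f x \<partial>lborel)) / h"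
    proof -
      have "s k = (\<lambda>x. (indicator A x * f (x + c) - indicator A x * f x) / h)"
        by (auto simp: s_def fun_eq_iff c_def h_def algebra_simps)
      then show ?thesis using i0 i1 by simp
    qed
    also have "\<dots> = (\<integral>y. (indicator A (y - c) - indicator A y) * f y \<partial>lborel) / h"
      using i0 i2 eq1 by (simp add: left_diff_distrib)
    also have "\<dots> \<le> (\<integral>y. indicator D y \<partial>lborel) / h"
    proof (intro divide_right_mono integral_mono)
      show "integrable lborel (\<lambda>y. (indicator A (y - c) - indicator A y) * f y)"
        using i0 i2 by (simp add: left_diff_distrib)
      show "integrable lborel (indicator D :: _ \<Rightarrow> real)" using Dfin' by simp
      fix y
      show "(indicator A (y - c) - indicator A y) * f y \<le> (indicator D y :: real)"
        using fb[of y] by (auto simp: D_def split: split_indicator)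
    qed (use h in auto)
    also have "\<dots> = measure lborel D / h" by simp
    also have "\<dots> \<le> M" using mD h by (simp add: field_simps)
    finally show ?thesis .
  qed
  show ?thesis
    by (rule LIMSEQ_le_const2[OF conv]) (use each in auto)
qed


lemma cbox_meas_le:
  fixes l u b :: "'a::euclidean_space"
  assumes lu: "\<forall>i\<in>Basis. l \<bullet> i \<le> u \<bullet> i" and b: "b \<in> Basis" and hb: "(u - l) \<bullet> b = h"
    and other: "\<forall>i\<in>Basis. i \<noteq> b \<longrightarrow> (u - l) \<bullet> i \<le> 1"
  shows "emeasure lborel (cbox l u) \<le> ennreal h"
proof -
  have nn: "\<forall>i\<in>Basis. 0 \<le> (u - l) \<bullet> i" using lu by (simp add: inner_diff_left)
  have "emeasure lborel (cbox l u) = ennreal (\<Prod>i\<in>Basis. (u - l) \<bullet> i)"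
    using lu nn by (simp add: prod_ennreal)
  also have "(\<Prod>i\<in>Basis. (u - l) \<bullet> i) = (u - l) \<bullet> b * (\<Prod>i\<in>Basis - {b}. (u - l) \<bullet> i)"
    using b by (simp add: prod.remove)
  also have "\<dots> \<le> h * 1"
  proof -
    have p1: "(\<Prod>i\<in>Basis - {b}. (u - l) \<bullet> i) \<le> 1"
      by (rule prod_le_1) (use nn other in auto)
    have "0 \<le> h" using hb nn b by auto
    then show ?thesis unfolding hb by (rule mult_left_mono[OF p1])
  qed
  finally show ?thesis by (simp add: ennreal_leI)
qed

lemma box_shift_measure:
  fixes a c b :: "'a::euclidean_space"
  assumes ac: "\<forall>i\<in>Basis. a \<bullet> i \<le> c \<bullet> i \<and> c \<bullet> i \<le> a \<bullet> i + 1" and b: "b \<in> Basis" and h: "h > 0"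
  shows "emeasure lborel {y. (y - h *\<^sub>R b \<in> cbox a c) \<noteq> (y \<in> cbox a c)} \<le> ennreal (2*h)"
proof -
  define S1 where "S1 = cbox a (c + (a \<bullet> b + h - c \<bullet> b) *\<^sub>R b)"
  define S2 where "S2 = cbox (a + (c \<bullet> b - a \<bullet> b) *\<^sub>R b) (c + h *\<^sub>R b)"
  have sub: "{y. (y - h *\<^sub>R b \<in> cbox a c) \<noteq> (y \<in> cbox a c)} \<subseteq> S1 \<union> S2"
  proof
    fix y assume "y \<in> {y. (y - h *\<^sub>R b \<in> cbox a c) \<noteq> (y \<in> cbox a c)}"
    then consider "y \<in> cbox a c" "y - h *\<^sub>R b \<notin> cbox a c" | "y \<notin> cbox a c" "y - h *\<^sub>R b \<in> cbox a c" by auto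
    then show "y \<in> S1 \<union> S2"
    proof cases
      case 1
      then have yin: "\<forall>i\<in>Basis. a \<bullet> i \<le> y \<bullet> i \<and> y \<bullet> i \<le> c \<bullet> i" by (auto simp: mem_box)
      from 1 obtain i where i: "i \<in> Basis" "\<not> (a \<bullet> i \<le> (y - h *\<^sub>R b) \<bullet> i \<and> (y - h *\<^sub>R b) \<bullet> i \<le> c \<bullet> i)"
        by (auto simp: mem_box)
      have "i = b"
      proof (rule ccontr)
        assume "i \<noteq> b" then show False using i yin b by (auto simp: inner_diff_left inner_Basis)
      qed
      then have "y \<bullet> b < a \<bullet> b + h" using i yin h b by (auto simp: inner_diff_left inner_Basis)
      then have "y \<in> S1" using yin b unfolding S1_def
        by (auto simp: mem_box inner_add_left inner_Basis)
      then show ?thesis by simp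
    next
      case 2
      then have yin: "\<forall>i\<in>Basis. a \<bullet> i \<le> (y - h *\<^sub>R b) \<bullet> i \<and> (y - h *\<^sub>R b) \<bullet> i \<le> c \<bullet> i" by (auto simp: mem_box)
      from 2 obtain i where i: "i \<in> Basis" "\<not> (a \<bullet> i \<le> y \<bullet> i \<and> y \<bullet> i \<le> c \<bullet> i)"
        by (auto simp: mem_box)
      have "i = b"
      proof (rule ccontr)
        assume "i \<noteq> b" then show False using i yin b by (auto simp: inner_diff_left inner_Basis)
      qed
      then have "c \<bullet> b < y \<bullet> b" using i yin h b by (auto simp: inner_diff_left inner_Basis)
      then have "y \<in> S2" using yin b h unfolding S2_def
        by (auto simp: mem_box inner_add_left inner_diff_left inner_Basis)
      then show ?thesis by simp
    qed
  qed
  have m1: "emeasure lborel S1 \<le> ennreal h" unfolding S1_def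
    by (rule cbox_meas_le[OF _ b]) (use ac h b in \<open>auto simp: inner_add_left inner_diff_left inner_Basis\<close>)
  have m2: "emeasure lborel S2 \<le> ennreal h" unfolding S2_def
    by (rule cbox_meas_le[OF _ b]) (use ac h b in \<open>auto simp: inner_add_left inner_diff_left inner_Basis\<close>)
  have "emeasure lborel {y. (y - h *\<^sub>R b \<in> cbox a c) \<noteq> (y \<in> cbox a c)} \<le> emeasure lborel (S1 \<union> S2)"
    by (rule emeasure_mono[OF sub]) (auto simp: S1_def S2_def)
  also have "\<dots> \<le> emeasure lborel S1 + emeasure lborel S2"
    by (rule emeasure_subadditive) (auto simp: S1_def S2_def)
  also have "\<dots> \<le> ennreal h + ennreal h" using m1 m2 by (rule add_mono)
  also have "\<dots> = ennreal (2 * h)" using h by (simp add: ennreal_plus[symmetric] del: ennreal_plus)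
  finally show ?thesis .
qed

lemma union_shift_measure:
  fixes Q :: "nat \<Rightarrow> 'a::euclidean_space set"
  assumes fin: "finite I" and Qm: "\<And>i. i \<in> I \<Longrightarrow> Q i \<in> sets borel"
    and each: "\<And>i. i \<in> I \<Longrightarrow> emeasure lborel {y. (y - v \<in> Q i) \<noteq> (y \<in> Q i)} \<le> ennreal K"
    and K: "0 \<le> K"
  shows "emeasure lborel {y. (y - v \<in> (\<Union>i\<in>I. Q i)) \<noteq> (y \<in> (\<Union>i\<in>I. Q i))} \<le> ennreal (K * card I)"
proof -
  have Dm: "{y. (y - v \<in> Q i) \<noteq> (y \<in> Q i)} \<in> sets borel" if "i \<in> I" for i
  proof -
    have [measurable]: "Q i \<in> sets borel" using Qm that .
    show ?thesis by measurable
  qed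
  have "emeasure lborel {y. (y - v \<in> (\<Union>i\<in>I. Q i)) \<noteq> (y \<in> (\<Union>i\<in>I. Q i))}
      \<le> emeasure lborel (\<Union>i\<in>I. {y. (y - v \<in> Q i) \<noteq> (y \<in> Q i)})"
    by (rule emeasure_mono) (use Dm fin in auto)
  also have "\<dots> \<le> (\<Sum>i\<in>I. emeasure lborel {y. (y - v \<in> Q i) \<noteq> (y \<in> Q i)})"
    by (rule emeasure_subadditive_finite) (use Dm fin in auto)
  also have "\<dots> \<le> (\<Sum>i\<in>I. ennreal K)" by (rule sum_mono) (rule each)
  also have "\<dots> = ennreal (K * card I)" using K by (simp add: ennreal_of_nat_eq_real_of_nat ennreal_mult' mult.commute)
  finally show ?thesis .
qed


lemma perimeter_bound:
  fixes A :: "'a::euclidean_space set"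
  assumes Am: "A \<in> sets borel" and Afin: "emeasure lborel A < \<infinity>" and M: "0 \<le> M"
    and sd: "\<And>b h. b \<in> Basis \<Longrightarrow> h > 0 \<Longrightarrow> emeasure lborel {y. (y - h *\<^sub>R b \<in> A) \<noteq> (y \<in> A)} \<le> ennreal (h * M)"
  shows "perimeter A U \<le> ereal (real DIM('a) * M)"
  unfolding perimeter_def
proof (rule SUP_least)
  fix T :: "'a \<Rightarrow> 'a" assume "T \<in> {T \<in> Cc1_fields U. \<forall>x. norm (T x) \<le> 1}"
  then have TC: "T \<in> Cc1_fields U" and Tn: "\<forall>x. norm (T x) \<le> 1" by auto
  obtain T' where der: "\<And>x. (T has_derivative T' x) (at x)"
    and T'c: "\<And>v. continuous_on UNIV (\<lambda>x. T' x v)"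
    and Kc: "compact (closure {x. T x \<noteq> 0})"
    using TC unfolding Cc1_fields_def by blast
  define K where "K = closure {x. T x \<noteq> 0}"
  have fd: "frechet_derivative T (at x) = T' x" for x
    using frechet_derivative_at[OF der[of x]] by simp
  have zero_out: "T' x = (\<lambda>v. 0)" if "x \<notin> K" for x
  proof -
    have "open (- K)" unfolding K_def by auto
    have "((\<lambda>_. 0) has_derivative (\<lambda>v. 0)) (at x)" by simp
    then have "(T has_derivative (\<lambda>v. 0)) (at x)"
      by (rule has_derivative_transform_within_open[OF _ \<open>open (- K)\<close>])
         (use that in \<open>auto simp: K_def closure_def\<close>)
    then show ?thesis using der[of x] has_derivative_unique by blast
  qed
  have bdd: "\<exists>C. \<forall>x. \<bar>T' x b \<bullet> b\<bar> \<le> C" for b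
  proof -
    have "continuous_on K (\<lambda>x. T' x b \<bullet> b)"
      using T'c[of b] by (intro continuous_intros) (auto intro: continuous_on_subset)
    then have "compact ((\<lambda>x. T' x b \<bullet> b) ` K)"
      using Kc unfolding K_def by (intro compact_continuous_image) auto
    then obtain C where C: "\<forall>y\<in>(\<lambda>x. T' x b \<bullet> b) ` K. \<bar>y\<bar> \<le> C"
      using compact_imp_bounded bounded_real by blast
    have "\<bar>T' x b \<bullet> b\<bar> \<le> max C 0" for x
      using C zero_out[of x] by (cases "x \<in> K") auto
    then show ?thesis by blast
  qed
  have T'm: "(\<lambda>x. T' x b \<bullet> b) \<in> borel_measurable borel" for b
    using T'c[of b] by (intro borel_measurable_continuous_onI continuous_intros)
  have intb: "integrable lborel (\<lambda>x. indicator A x * (T' x b \<bullet> b))" for b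
  proof -
    obtain C where C: "\<forall>x. \<bar>T' x b \<bullet> b\<bar> \<le> C" using bdd by blast
    show ?thesis
      by (rule integrableI_bounded_set[where A=A and B=C]) (use Am Afin C T'm[of b] in \<open>auto split: split_indicator\<close>)
  qed
  have each: "(\<integral>x. indicator A x * (T' x b \<bullet> b) \<partial>lborel) \<le> M" if b: "b \<in> Basis" for b
  proof -
    obtain C where C: "\<forall>x. \<bar>T' x b \<bullet> b\<bar> \<le> C" using bdd by blast
    have "(\<integral>x. indicator A x * (\<lambda>v. T' x v \<bullet> b) b \<partial>lborel) \<le> M"
    proof (rule deriv_int_bound[where f="\<lambda>x. T x \<bullet> b" and f'="\<lambda>x v. T' x v \<bullet> b" and C=C])
      show "((\<lambda>x. T x \<bullet> b) has_derivative (\<lambda>v. T' x v \<bullet> b)) (at x)" for x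
        using der[of x] by (auto intro!: derivative_eq_intros)
      show "\<bar>T x \<bullet> b\<bar> \<le> 1" for x using Basis_le_norm[OF b, of "T x"] Tn by (meson order_trans)
    qed (use C T'm Am Afin M sd b in auto)
    then show ?thesis by simp
  qed
  have "(LINT x:A|lebesgue. divergence T x) = (\<integral>x. indicator A x * (\<Sum>b\<in>Basis. T' x b \<bullet> b) \<partial>lborel)"
  proof -
    have m: "(\<lambda>x. indicator A x * (\<Sum>b\<in>Basis. T' x b \<bullet> b)) \<in> borel_measurable lborel"
      using Am T'm by measurable
    have "(LINT x:A|lebesgue. divergence T x) = (\<integral>x. indicator A x * (\<Sum>b\<in>Basis. T' x b \<bullet> b) \<partial>lebesgue)"
      unfolding set_lebesgue_integral_def divergence_def fd by simp
    also have "\<dots> = (\<integral>x. indicator A x * (\<Sum>b\<in>Basis. T' x b \<bullet> b) \<partial>lborel)"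
      using m by (intro integral_completion) simp
    finally show ?thesis .
  qed
  also have "\<dots> = (\<Sum>b\<in>Basis. \<integral>x. indicator A x * (T' x b \<bullet> b) \<partial>lborel)"
    unfolding sum_distrib_left by (rule Bochner_Integration.integral_sum) (rule intb)
  also have "\<dots> \<le> (\<Sum>b\<in>(Basis::'a set). M)" by (rule sum_mono) (rule each)
  also have "\<dots> = real DIM('a) * M" by simp
  finally show "ereal (LINT x:A|lebesgue. divergence T x) \<le> ereal (real DIM('a) * M)" by simp
qed


lemma nn_translate:
  fixes F :: "'a::euclidean_space \<Rightarrow> ennreal"
  assumes [measurable]: "F \<in> borel_measurable borel"
  shows "(\<integral>\<^sup>+ y. F (y - x) \<partial>lborel) = (\<integral>\<^sup>+ z. F z \<partial>lborel)"
proof -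
  have "(\<integral>\<^sup>+ y. F (y - x) \<partial>lborel) = (\<integral>\<^sup>+ y. F (y - x) \<partial>distr lborel borel ((+) x))"
    by (simp add: lborel_distr_plus)
  also have "\<dots> = (\<integral>\<^sup>+ z. F (x + z - x) \<partial>lborel)"
    by (subst nn_integral_distr) auto
  finally show ?thesis by simp
qed

lemma K0_finite:
  fixes g :: "'a::euclidean_space \<Rightarrow> real"
  assumes gm[measurable]: "g \<in> borel_measurable borel" and adm: "R_admissible g"
  shows "(\<integral>\<^sup>+ z. ennreal (g z) * indicator (ball 0 (1/2)) z \<partial>lborel) < \<infinity>"
proof -
  have [measurable]: "ball (0::'a) (1/2) \<in> sets borel" by simp
  define K0 where "K0 = (\<integral>\<^sup>+ z. ennreal (g z) * indicator (ball 0 (1/2)) z \<partial>lborel)"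
  have fin: "R_energy g (ball 0 1) < \<infinity>" using adm unfolding R_admissible_def by simp
  have inner: "K0 \<le> (\<integral>\<^sup>+ y. ennreal (g (y - x)) * indicator (ball 0 1) y \<partial>lebesgue)"
    if x: "x \<in> ball 0 (1/2)" for x
  proof -
    have "K0 = (\<integral>\<^sup>+ y. ennreal (g (y - x)) * indicator (ball 0 (1/2)) (y - x) \<partial>lborel)"
      unfolding K0_def by (rule nn_translate[symmetric]) measurable
    also have "\<dots> \<le> (\<integral>\<^sup>+ y. ennreal (g (y - x)) * indicator (ball 0 1) y \<partial>lborel)"
    proof (rule nn_integral_mono)
      fix y
      have "y \<in> ball 0 1" if "y - x \<in> ball 0 (1/2)"
      proof -
        have "norm y \<le> norm (y - x) + norm x" by (metis diff_add_cancel norm_triangle_ineq)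
        then show ?thesis using that x by auto
      qed
      then show "ennreal (g (y - x)) * indicator (ball 0 (1/2)) (y - x) \<le> ennreal (g (y - x)) * indicator (ball 0 1) y"
        by (auto split: split_indicator)
    qed
    also have "\<dots> = (\<integral>\<^sup>+ y. ennreal (g (y - x)) * indicator (ball 0 1) y \<partial>lebesgue)"
      by (simp add: nn_integral_completion)
    finally show ?thesis .
  qed
  have "K0 * emeasure lebesgue (ball (0::'a) (1/2)) = (\<integral>\<^sup>+ x. K0 * indicator (ball (0::'a) (1/2)) x \<partial>lebesgue)"
    by (rule nn_integral_cmult_indicator[symmetric]) simp
  also have "\<dots> \<le> R_energy g (ball 0 1)"
    unfolding R_energy_def
  proof (rule nn_integral_mono)
    fix x :: 'a
    show "K0 * indicator (ball 0 (1/2)) x \<le> (\<integral>\<^sup>+ y. ennreal (g (y - x)) * indicator (ball 0 1) y \<partial>lebesgue) * indicator (ball 0 1) x"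
      using inner[of x] by (auto split: split_indicator)
  qed
  finally have lt: "K0 * emeasure lebesgue (ball (0::'a) (1/2)) < \<infinity>" using fin by simp
  have "measure lborel (ball (0::'a) (1/2)) > 0" by (rule content_ball_pos) simp
  then have "emeasure lborel (ball (0::'a) (1/2)) \<noteq> 0" by (auto simp: measure_def)
  then have "emeasure lebesgue (ball (0::'a) (1/2)) \<noteq> 0" by simp
  with lt have "K0 < \<infinity>" by (auto simp: ennreal_mult_less_top top.not_eq_extremum)
  then show ?thesis unfolding K0_def .
qed

lemma R_bound:
  fixes g :: "'a::euclidean_space \<Rightarrow> real" and E :: "'a set"
  assumes gm[measurable]: "g \<in> borel_measurable borel"
    and Em[measurable]: "E \<in> sets borel" and Emeas: "emeasure lborel E = ennreal m" and m: "0 < m"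
    and sep: "\<And>x y. x \<in> E \<Longrightarrow> y \<in> E \<Longrightarrow> norm (y - x) < 1/2 \<or> R0 \<le> norm (y - x)"
    and small: "\<And>z. R0 \<le> norm z \<Longrightarrow> g z \<le> 1/m"
  shows "R_energy g E \<le> ((\<integral>\<^sup>+ z. ennreal (g z) * indicator (ball 0 (1/2)) z \<partial>lborel) + 1) * ennreal m"
proof -
  have [measurable]: "ball (0::'a) (1/2) \<in> sets borel" by simp
  define K0 where "K0 = (\<integral>\<^sup>+ z. ennreal (g z) * indicator (ball (0::'a) (1/2)) z \<partial>lborel)"
  have inner: "(\<integral>\<^sup>+ y. ennreal (g (y - x)) * indicator E y \<partial>lebesgue) \<le> K0 + 1" if x: "x \<in> E" for x
  proof -
    have "(\<integral>\<^sup>+ y. ennreal (g (y - x)) * indicator E y \<partial>lebesgue) = (\<integral>\<^sup>+ y. ennreal (g (y - x)) * indicator E y \<partial>lborel)"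
      by (simp add: nn_integral_completion)
    also have "\<dots> \<le> (\<integral>\<^sup>+ y. ennreal (g (y - x)) * indicator (ball 0 (1/2)) (y - x) + ennreal (1/m) * indicator E y \<partial>lborel)"
    proof (rule nn_integral_mono)
      fix y
      show "ennreal (g (y - x)) * indicator E y \<le> ennreal (g (y - x)) * indicator (ball 0 (1/2)) (y - x) + ennreal (1/m) * indicator E y"
      proof (cases "y \<in> E")
        case True
        from sep[OF x True] show ?thesis
        proof
          assume "norm (y - x) < 1/2"
          then have "y - x \<in> ball 0 (1/2)" by simp
          then show ?thesis using True by simp
        next
          assume "R0 \<le> norm (y - x)"
          then have "ennreal (g (y - x)) \<le> ennreal (1/m)" using small by (intro ennreal_leI) auto
          then show ?thesis using True by (simp add: add_increasing)
        qed
      qed simp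
    qed
    also have "\<dots> = (\<integral>\<^sup>+ y. ennreal (g (y - x)) * indicator (ball 0 (1/2)) (y - x) \<partial>lborel) + (\<integral>\<^sup>+ y. ennreal (1/m) * indicator E y \<partial>lborel)"
      by (rule nn_integral_add) auto
    also have "(\<integral>\<^sup>+ y. ennreal (g (y - x)) * indicator (ball 0 (1/2)) (y - x) \<partial>lborel) = K0"
      unfolding K0_def by (rule nn_translate) measurable
    also have "(\<integral>\<^sup>+ y. ennreal (1/m) * indicator E y \<partial>lborel) = ennreal (1/m) * ennreal m"
      using Emeas by (simp add: nn_integral_cmult_indicator)
    also have "ennreal (1/m) * ennreal m = 1" using m by (simp add: ennreal_mult[symmetric])
    finally show ?thesis .
  qed
  have "R_energy g E \<le> (\<integral>\<^sup>+ x. (K0 + 1) * indicator E x \<partial>lebesgue)"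
    unfolding R_energy_def
  proof (rule nn_integral_mono)
    fix x show "(\<integral>\<^sup>+ y. ennreal (g (y - x)) * indicator E y \<partial>lebesgue) * indicator E x \<le> (K0 + 1) * indicator E x"
      using inner[of x] by (auto split: split_indicator)
  qed
  also have "\<dots> = (K0 + 1) * emeasure lebesgue E"
    by (rule nn_integral_cmult_indicator) simp
  also have "emeasure lebesgue E = ennreal m" using Emeas by simp
  finally show ?thesis unfolding K0_def .
qed


theorem corollary3p3:
  fixes g :: "('b::euclidean_space \<times> real) \<Rightarrow> real" and G :: "real \<Rightarrow> real" and lam :: real
  assumes "-1 < lam" "lam < 1"
    and "g \<in> borel_measurable borel" "R_admissible g" "infinitesimal g"
    and "G \<in> borel_measurable borel" "G_admissible DIM('b \<times> real) G"
  shows "\<exists>c>0. \<forall>m::real. m \<ge> 1 \<longrightarrow>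
           (\<exists>E. E \<in> sets lebesgue \<and> E \<subseteq> - lower_half \<and> emeasure lebesgue E = ennreal m \<and>
                F_energy lam g G E \<le> ereal (c * m))"
proof -
  note gm = assms(3) and gadm = assms(4) and ginf = assms(5) and Gm = assms(6) and Gadm = assms(7)
  define db where "db = DIM('b)"
  define d where "d = DIM('b \<times> real)"
  have d: "d = db + 1" unfolding d_def db_def by simp
  have db1: "1 \<le> db" unfolding db_def by (simp add: DIM_positive Suc_le_eq)
  define s0 :: real where "s0 = 1 / (4 * real d)"
  have s0pos: "0 < s0" unfolding s0_def d by simp
  have s0d: "real d * s0 = 1/4" unfolding s0_def d by simp
  have s0le: "s0 \<le> 1/4" using s0d d by (simp add: s0_def field_simps)
  define v0 :: real where "v0 = s0 ^ d"
  have v0pos: "0 < v0" unfolding v0_def using s0pos by simp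
  have v0eq: "v0 = s0 ^ db * s0" unfolding v0_def d by simp
  define K0 where "K0 = (\<integral>\<^sup>+ z. ennreal (g z) * indicator (ball 0 (1/2)) z \<partial>lborel)"
  have K0fin: "K0 < \<infinity>" unfolding K0_def by (rule K0_finite[OF gm gadm])
  define k0 where "k0 = enn2real K0"
  have K0eq: "K0 = ennreal k0" and k0pos: "0 \<le> k0"
    using K0fin unfolding k0_def by (auto simp: less_top)
  obtain B where B: "\<And>t. t \<in> {0<..<2} \<Longrightarrow> G t \<le> B"
    using Gadm unfolding G_admissible_def bdd_above_def by blast
  define B' where "B' = max B 0"
  define c where "c = 2 * real d * (1 / v0 + 1) + (k0 + 1) + B'"
  have c1: "0 \<le> 2 * real d * (1 / v0 + 1)" using v0pos by simp
  have c2: "0 \<le> B'" unfolding B'_def by simp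
  have cpos: "0 < c" unfolding c_def using c1 c2 k0pos by linarith
  show ?thesis
  proof (intro exI[of _ c] conjI allI impI cpos)
    fix m :: real assume m: "1 \<le> m"
    then have mpos: "0 < m" by simp
    obtain R0 where R0: "\<And>z. R0 \<le> norm z \<Longrightarrow> g z \<le> 1/m"
    proof -
      have "\<exists>b. \<forall>z. b \<le> norm z \<longrightarrow> dist (g z) 0 < 1/m"
        using ginf mpos unfolding infinitesimal_def Lim_at_infinity by simp
      then obtain b where bb: "\<forall>z. b \<le> norm z \<longrightarrow> dist (g z) 0 < 1/m" by blast
      have "g z \<le> 1/m" if "b \<le> norm z" for z
      proof -
        have "dist (g z) 0 < 1/m" using bb that by blast
        then have "\<bar>g z\<bar> < 1/m" by (simp add: dist_real_def)
        then show ?thesis by simp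
      qed
      then show ?thesis using that by blast
    qed
    define L where "L = max R0 0 + 1"
    obtain e :: 'b where e: "e \<in> Basis" using nonempty_Basis by blast
    define N where "N = nat \<lceil>m / v0\<rceil>"
    have cpos0: "0 < m / v0" using mpos v0pos by simp
    then have "0 \<le> \<lceil>m / v0\<rceil>" by simp
    then have Nr: "real N = real_of_int \<lceil>m / v0\<rceil>" unfolding N_def by simp
    have Nge: "m / v0 \<le> real N" unfolding Nr by (rule le_of_int_ceiling)
    have Nle: "real N \<le> m / v0 + 1" unfolding Nr using ceiling_correct[of "m / v0"] by linarith
    have "0 < real N" using Nge cpos0 by linarith
    then have N1: "1 \<le> N" by simp
    define t where "t = m / (real N * s0 ^ db)"
    have tpos: "0 < t" unfolding t_def using mpos N1 s0pos by simp
    have tle: "t \<le> s0"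
    proof -
      have "m \<le> real N * v0" using Nge v0pos by (simp add: field_simps)
      then have "m \<le> (real N * s0 ^ db) * s0" unfolding v0eq by (simp add: mult.assoc)
      then show ?thesis unfolding t_def using N1 s0pos by (simp add: divide_le_eq mult.commute)
    qed
    define c0 :: 'b where "c0 = (\<Sum>i\<in>Basis. s0 *\<^sub>R i)"
    have c0i: "c0 \<bullet> i = s0" if "i \<in> Basis" for i
      unfolding c0_def using that by (simp add: inner_sum_left inner_Basis if_distrib sum.delta cong: if_cong)
    define a where "a i = (real i * L) *\<^sub>R e" for i :: nat
    define Q where "Q i = cbox (a i, 1::real) (a i + c0, 1 + t)" for i
    define E where "E = (\<Union>i\<in>{..<N}. Q i)"
    have memQ: "y \<in> Q i \<longleftrightarrow> (\<forall>j\<in>Basis. a i \<bullet> j \<le> fst y \<bullet> j \<and> fst y \<bullet> j \<le> a i \<bullet> j + s0) \<and> 1 \<le> snd y \<and> snd y \<le> 1 + t" for y i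
      unfolding Q_def cbox_Pair_eq mem_Times_iff cbox_interval
      by (auto simp: mem_box inner_add_left c0i)
    have Qm: "Q i \<in> sets borel" for i unfolding Q_def by simp
    have Em: "E \<in> sets borel" unfolding E_def using Qm by auto
    have Esnd: "1 \<le> snd y \<and> snd y \<le> 1 + t" if "y \<in> E" for y
      using that memQ unfolding E_def by auto
    have Elow: "E \<subseteq> - lower_half" using Esnd by (force simp: lower_half_def)
    have Esub: "E \<subseteq> {y. 1 \<le> snd y}" using Esnd by auto
    have Eleb: "E \<in> sets lebesgue" using Em by simp
    have ae: "a i \<bullet> e = real i * L" for i unfolding a_def using e by simp
    have fstQ: "real i * L \<le> fst y \<bullet> e \<and> fst y \<bullet> e \<le> real i * L + s0" if "y \<in> Q i" for y i
      using that e unfolding memQ ae[symmetric] by blast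
    have diamQ: "norm (y - x) < 1/2" if "x \<in> Q i" "y \<in> Q i" for x y i
    proof -
      have cx: "\<forall>j\<in>Basis. a i \<bullet> j \<le> fst x \<bullet> j \<and> fst x \<bullet> j \<le> a i \<bullet> j + s0" "1 \<le> snd x" "snd x \<le> 1 + t"
        using that(1) unfolding memQ by auto
      have cy: "\<forall>j\<in>Basis. a i \<bullet> j \<le> fst y \<bullet> j \<and> fst y \<bullet> j \<le> a i \<bullet> j + s0" "1 \<le> snd y" "snd y \<le> 1 + t"
        using that(2) unfolding memQ by auto
      have "norm (fst (y - x)) \<le> (\<Sum>j\<in>(Basis::'b set). \<bar>fst (y - x) \<bullet> j\<bar>)" by (rule norm_le_l1)
      also have "\<dots> \<le> (\<Sum>j\<in>(Basis::'b set). s0)"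
      proof (rule sum_mono)
        fix j :: 'b assume j: "j \<in> Basis"
        have "a i \<bullet> j \<le> fst x \<bullet> j \<and> fst x \<bullet> j \<le> a i \<bullet> j + s0" "a i \<bullet> j \<le> fst y \<bullet> j \<and> fst y \<bullet> j \<le> a i \<bullet> j + s0"
          using cx(1) cy(1) j by auto
        then show "\<bar>fst (y - x) \<bullet> j\<bar> \<le> s0" by (simp add: inner_diff_left abs_le_iff)
      qed
      also have "\<dots> = real db * s0" unfolding db_def by simp
      finally have n1: "norm (fst (y - x)) \<le> real db * s0" .
      have n2: "norm (snd (y - x)) \<le> s0" using cx cy tle by auto
      have "norm (y - x) \<le> norm (fst (y - x)) + norm (snd (y - x))"
        by (metis norm_Pair_le prod.collapse)
      also have "\<dots> \<le> real db * s0 + s0" using n1 n2 by simp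
      also have "\<dots> = real d * s0" unfolding d by (simp add: algebra_simps)
      finally show ?thesis using s0d by simp
    qed
    have Lpos: "L - s0 > 0" and LR0: "R0 \<le> L - s0" unfolding L_def using s0le by auto
    have farQ: "L - s0 \<le> norm (y - x)" if "x \<in> Q i" "y \<in> Q j" "i \<noteq> j" for x y i j
    proof -
      have "L - s0 \<le> \<bar>fst (y - x) \<bullet> e\<bar>"
      proof (cases "i < j")
        case True
        then have "real i + 1 \<le> real j" by simp
        then have "(real i + 1) * L \<le> real j * L" using Lpos s0pos by (intro mult_right_mono) auto
        then have X: "real i * L + L \<le> real j * L" by (simp add: distrib_right)
        have "L - s0 \<le> fst y \<bullet> e - fst x \<bullet> e" using X fstQ[OF that(1)] fstQ[OF that(2)] by linarith
        then show ?thesis by (simp add: inner_diff_left)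
      next
        case False
        then have "real j + 1 \<le> real i" using that(3) by simp
        then have "(real j + 1) * L \<le> real i * L" using Lpos s0pos by (intro mult_right_mono) auto
        then have X: "real j * L + L \<le> real i * L" by (simp add: distrib_right)
        have "L - s0 \<le> fst x \<bullet> e - fst y \<bullet> e" using X fstQ[OF that(1)] fstQ[OF that(2)] by linarith
        then show ?thesis by (simp add: inner_diff_left)
      qed
      also have "\<dots> \<le> norm (fst (y - x))" by (rule Basis_le_norm[OF e])
      also have "\<dots> \<le> norm (y - x)" by (metis norm_fst_le prod.collapse)
      finally show ?thesis .
    qed
    have sep: "norm (y - x) < 1/2 \<or> R0 \<le> norm (y - x)" if xE: "x \<in> E" and yE: "y \<in> E" for x y
    proof -
      obtain i j where "x \<in> Q i" "y \<in> Q j" using xE yE unfolding E_def by auto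
      then show ?thesis
      proof (cases "i = j")
        case True
        then show ?thesis using diamQ[OF \<open>x \<in> Q i\<close>] \<open>y \<in> Q j\<close> by blast
      next
        case False
        then show ?thesis using farQ[OF \<open>x \<in> Q i\<close> \<open>y \<in> Q j\<close>] LR0 by linarith
      qed
    qed
    have disj: "disjoint_family_on Q {..<N}"
      unfolding disjoint_family_on_def
    proof (intro ballI impI)
      fix i j assume "i \<in> {..<N}" "j \<in> {..<N}" "i \<noteq> j"
      show "Q i \<inter> Q j = {}"
      proof (rule ccontr)
        assume "Q i \<inter> Q j \<noteq> {}"
        then obtain x where "x \<in> Q i" "x \<in> Q j" by auto
        with farQ[OF this \<open>i \<noteq> j\<close>] Lpos show False by simp
      qed
    qed
    have Qmeas: "emeasure lborel (Q i) = ennreal (s0 ^ db * t)" for i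
    proof -
      have QT: "Q i = cbox (a i) (a i + c0) \<times> {1..1+t}"
        unfolding Q_def cbox_Pair_eq cbox_interval ..
      have m1: "emeasure lborel (cbox (a i) (a i + c0)) = ennreal (s0 ^ db)"
      proof -
        have "emeasure lborel (cbox (a i) (a i + c0)) = ennreal (\<Prod>j\<in>(Basis::'b set). (a i + c0 - a i) \<bullet> j)"
          using s0pos by (simp add: inner_add_left c0i prod_ennreal)
        also have "(\<Prod>j\<in>(Basis::'b set). (a i + c0 - a i) \<bullet> j) = s0 ^ db"
          by (simp add: c0i db_def)
        finally show ?thesis .
      qed
      have m2: "emeasure lborel {1..1+t} = ennreal t" using tpos by simp
      have "emeasure lborel (Q i) = emeasure (lborel \<Otimes>\<^sub>M lborel) (cbox (a i) (a i + c0) \<times> {1..1+t})"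
        unfolding QT lborel_prod ..
      also have "\<dots> = emeasure lborel (cbox (a i) (a i + c0)) * emeasure lborel {1..1+t}"
        by (rule lborel.emeasure_pair_measure_Times) auto
      also have "\<dots> = ennreal (s0 ^ db * t)" unfolding m1 m2 using s0pos tpos by (simp add: ennreal_mult)
      finally show ?thesis .
    qed
    have Emeas: "emeasure lborel E = ennreal m"
    proof -
      have "emeasure lborel E = (\<Sum>i\<in>{..<N}. emeasure lborel (Q i))"
        unfolding E_def by (rule sum_emeasure[symmetric]) (use Qm disj in auto)
      also have "\<dots> = ennreal (real N * (s0 ^ db * t))" unfolding Qmeas
        using s0pos tpos by (simp add: ennreal_of_nat_eq_real_of_nat ennreal_mult)
      also have "real N * (s0 ^ db * t) = m" unfolding t_def using N1 s0pos by simp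
      finally show ?thesis .
    qed
    have Emeas_leb: "emeasure lebesgue E = ennreal m" using Em Emeas by simp
    have sdQ: "emeasure lborel {y. (y - h *\<^sub>R b \<in> Q i) \<noteq> (y \<in> Q i)} \<le> ennreal (2 * h)"
      if b: "b \<in> Basis" and h: "h > 0" for b h i
      unfolding Q_def
    proof (rule box_shift_measure[OF _ b h])
      show "\<forall>j\<in>Basis. (a i, 1::real) \<bullet> j \<le> (a i + c0, 1 + t) \<bullet> j \<and> (a i + c0, 1 + t) \<bullet> j \<le> (a i, 1::real) \<bullet> j + 1"
        using s0pos s0le tpos tle by (auto simp: Basis_prod_def inner_add_left c0i)
    qed
    have sdE: "emeasure lborel {y. (y - h *\<^sub>R b \<in> E) \<noteq> (y \<in> E)} \<le> ennreal (h * (2 * real N))"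
      if b: "b \<in> Basis" and h: "h > 0" for b h
    proof -
      have "emeasure lborel {y. (y - h *\<^sub>R b \<in> (\<Union>i\<in>{..<N}. Q i)) \<noteq> (y \<in> (\<Union>i\<in>{..<N}. Q i))} \<le> ennreal (2 * h * card {..<N})"
        by (rule union_shift_measure) (use Qm sdQ[OF b h] h in auto)
      then show ?thesis unfolding E_def by (simp add: algebra_simps)
    qed
    have perim: "perimeter E (- lower_half) \<le> ereal (real d * (2 * real N))"
      unfolding d_def
      by (rule perimeter_bound[OF Em]) (use Emeas sdE in auto)
    have Plam: "P_lambda lam E = perimeter E (- lower_half)"
      unfolding P_lambda_def rb_hyper[OF Esub] hausdorff_empty by (simp add: zero_ennreal.rep_eq)
    have Gbd: "G_energy G E \<le> ennreal (B' * m)"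
    proof -
      have "G_energy G E \<le> (\<integral>\<^sup>+ x. ennreal B' * indicator E x \<partial>lebesgue)"
        unfolding G_energy_def
      proof (rule nn_integral_mono)
        fix x :: "'b \<times> real"
        show "ennreal (G (snd x)) * indicator E x \<le> ennreal B' * indicator E x"
        proof (cases "x \<in> E")
          case True
          then have "snd x \<in> {0<..<2}" using Esnd[OF True] tle s0le by auto
          then have "G (snd x) \<le> B'" using B unfolding B'_def by force
          then show ?thesis using True by (simp add: ennreal_leI)
        qed simp
      qed
      also have "\<dots> = ennreal B' * emeasure lebesgue E"
        by (rule nn_integral_cmult_indicator) (rule Eleb)
      also have "\<dots> = ennreal (B' * m)" unfolding Emeas_leb using mpos by (simp add: B'_def ennreal_mult)
      finally show ?thesis .
    qed
    have Rbd: "R_energy g E \<le> ennreal ((k0 + 1) * m)"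
    proof -
      have "R_energy g E \<le> (K0 + 1) * ennreal m"
        unfolding K0_def by (rule R_bound[OF gm Em Emeas mpos sep R0]) auto
      also have "\<dots> = ennreal ((k0 + 1) * m)" unfolding K0eq using k0pos mpos
        by (simp add: ennreal_mult)
      finally show ?thesis .
    qed
    have "F_energy lam g G E \<le> ereal (real d * (2 * real N)) + ereal ((k0 + 1) * m) + ereal (B' * m)"
    proof -
      have r: "enn2ereal (R_energy g E) \<le> ereal ((k0 + 1) * m)"
        using Rbd k0pos mpos by (metis enn2ereal_ennreal less_eq_ennreal.rep_eq mult_nonneg_nonneg add_nonneg_nonneg zero_le_one less_imp_le)
      have gg: "enn2ereal (G_energy G E) \<le> ereal (B' * m)"
        using Gbd mpos unfolding B'_def by (metis enn2ereal_ennreal less_eq_ennreal.rep_eq mult_nonneg_nonneg max.cobounded2 less_imp_le)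
      show ?thesis unfolding F_energy_def Plam using perim r gg by (intro add_mono)
    qed
    also have "\<dots> \<le> ereal (c * m)"
    proof -
      have "real N \<le> m / v0 + m" using Nle m by linarith
      also have "\<dots> = m * (1 / v0 + 1)" by (simp add: algebra_simps)
      finally have "real N \<le> m * (1 / v0 + 1)" .
      then have "(2 * real d) * real N \<le> (2 * real d) * (m * (1 / v0 + 1))" by (rule mult_left_mono) simp
      then have "real d * (2 * real N) \<le> 2 * real d * (1 / v0 + 1) * m" by (simp only: ac_simps)
      then show ?thesis unfolding c_def by (simp add: algebra_simps)
    qed
    finally show "\<exists>E. E \<in> sets lebesgue \<and> E \<subseteq> - lower_half \<and> emeasure lebesgue E = ennreal m \<and>
                F_energy lam g G E \<le> ereal (c * m)"
      using Eleb Elow Emeas_leb by blast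
  qed
qed


end
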